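(* In the setting of the context, for $i\in\{1,2\}$ and $\lambda>0$ let $\mathbf s_i(\lambda)=\big(\mathbf X_{s,1}\otimes\mathbf X_{s,2,i}+\lambda\mathbf I\big)^{-1}\mathbf x_{s,3,i}$ and $g(\lambda)=\mathrm{Tr}(\mathbf s_i(\lambda)\mathbf s_i(\lambda)^H)=\|\mathbf s_i(\lambda)\|_2^2$ (which equals $\mathrm{Tr}(\mathbf S_i\mathbf S_i^H)$ for $\mathbf s_i=\mathrm{vec}(\mathbf S_i)$). Then $g$ is monotonically non-increasing in $\lambda$, and if $\lambda_i>0$ satisfies $g(\lambda_i)=\tau_i$ (with $\tau_i>0$), then $$\lambda_i\le\sqrt{\frac{\sigma_{s,3,i}}{\tau_i}}-\sigma_{s,\min,i},$$ where $\sigma_{s,3,i}=\|\mathbf x_{s,3,i}\|_2^2$ and $\sigma_{s,\min,i}$ is the smallest eigenvalue of $\mathbf X_{s,1}\otimes\mathbf X_{s,2,i}$.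
   Context: MAC phase of a MIMO two-way relay system (sources with $N_1,N_2$ antennas, relay with $M$ antennas, training length $L_S$). Let $\mathbf Z_{t,H_i}\in\mathbb C^{N_i\times N_i}$ ($i=1,2$) be Hermitian positive definite with $\mathbf Z_{t,H_i}=\mathbf C_{t,H_i}\mathbf C_{t,H_i}^H$, $\mathbf C_{t,H}=\mathrm{Blkdiag}(\mathbf C_{t,H_1},\mathbf C_{t,H_2})$; let $\mathbf K_{q,R}\in\mathbb C^{L_S\times L_S}$ be Hermitian positive definite (temporal disturbance covariance at the relay; here the spatial disturbance covariance equals the receive channel covariance, $\mathbf K_{r,R}=\mathbf Z_{r,H}$). Given any $\mathbf S\in\mathbb C^{(N_1+N_2)\times L_S}$ (current training), define $\mathbf T_{R,1}=\mathbf C_{t,H}^H\mathbf S^*\big(\mathbf S^T\mathbf C_{t,H}\mathbf C_{t,H}^H\mathbf S^*+\mathbf K_{q,R}\big)^{-1}\in\mathbb C^{(N_1+N_2)\times L_S}$, let $\mathbf T_{R,1,1}$ be its first $N_1$ rows and $\mathbf T_{R,1,2}$ its last $N_2$ rows, and set $\mathbf X_{s,1}=\mathbf T_{R,1}^H\mathbf C_{t,H}^H\mathbf C_{t,H}\mathbf T_{R,1}$, $\mathbf X_{s,2,i}=\mathbf Z_{t,H_i}^T$, $\mathbf x_{s,3,i}=\mathrm{vec}\big((\mathbf T_{R,1,i}^H\mathbf C_{t,H_i}^H\mathbf Z_{t,H_i}^H)^T\big)$. *)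

theory Defs
  imports "Jordan_Normal_Form.Schur_Decomposition" "Jordan_Normal_Form.Char_Poly"
begin

definition conj_mat :: "complex mat \<Rightarrow> complex mat" where
  "conj_mat A = map_mat cnj A"

(* inverse of a square matrix (all matrices inverted below are invertible) *)
definition mat_inv :: "complex mat \<Rightarrow> complex mat" where
  "mat_inv A = (SOME B. B \<in> carrier_mat (dim_row A) (dim_row A) \<and> inverts_mat A B \<and> inverts_mat B A)"

definition hermitian_pd :: "complex mat \<Rightarrow> nat \<Rightarrow> bool" where
  "hermitian_pd A n \<longleftrightarrow> A \<in> carrier_mat n n \<and> mat_adjoint A = A \<and>
     (\<forall>v \<in> carrier_vec n. v \<noteq> 0\<^sub>v n \<longrightarrow> Re (scalar_prod (conjugate v) (A *\<^sub>v v)) > 0)"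

definition kron :: "complex mat \<Rightarrow> complex mat \<Rightarrow> complex mat" where
  "kron A B = mat (dim_row A * dim_row B) (dim_col A * dim_col B)
     (\<lambda>(i,j). A $$ (i div dim_row B, j div dim_col B) * B $$ (i mod dim_row B, j mod dim_col B))"

definition vec_mat :: "complex mat \<Rightarrow> complex vec" where
  "vec_mat A = vec (dim_row A * dim_col A) (\<lambda>k. A $$ (k mod dim_row A, k div dim_row A))"

definition row_block :: "complex mat \<Rightarrow> nat \<Rightarrow> nat \<Rightarrow> complex mat" where
  "row_block A r n = mat n (dim_col A) (\<lambda>(i,j). A $$ (r + i, j))"

definition blkdiag :: "complex mat \<Rightarrow> complex mat \<Rightarrow> complex mat" where
  "blkdiag A B = four_block_mat A (0\<^sub>m (dim_row A) (dim_col B)) (0\<^sub>m (dim_row B) (dim_col A)) B"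

definition sq_norm_cvec :: "complex vec \<Rightarrow> real" where
  "sq_norm_cvec v = (\<Sum>k<dim_vec v. (cmod (v $ k))\<^sup>2)"

(* smallest eigenvalue of a (Hermitian, hence real-spectrum) matrix *)
definition min_eigenvalue :: "complex mat \<Rightarrow> real" where
  "min_eigenvalue A = Min {x::real. eigenvalue A (complex_of_real x)}"

end

theory Submission
  imports Defs
begin


lemma adj_eq: fixes A :: "complex mat" shows "mat_adjoint A = mat (dim_col A) (dim_row A) (\<lambda>(i,j). cnj (A $$ (j,i)))"
  by (rule eq_matI, auto simp: mat_adjoint_def mat_of_rows_def)

lemma adj_dims[simp]: fixes A :: "complex mat" shows "dim_row (mat_adjoint A) = dim_col A" "dim_col (mat_adjoint A) = dim_row A"
  by (simp_all add: adj_eq)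

lemma adj_index[simp]: fixes A :: "complex mat" shows "i < dim_col A \<Longrightarrow> j < dim_row A \<Longrightarrow> mat_adjoint A $$ (i,j) = cnj (A $$ (j,i))"
  by (auto simp: adj_eq)

lemma adj_carrier[simp]: fixes A :: "complex mat" shows "A \<in> carrier_mat r c \<Longrightarrow> mat_adjoint A \<in> carrier_mat c r"
  by auto

lemma adj_adj[simp]: fixes A :: "complex mat" shows "mat_adjoint (mat_adjoint A) = A"
  by (rule eq_matI, auto)

lemma adj_mult: fixes A B :: "complex mat" assumes "A \<in> carrier_mat n k" "B \<in> carrier_mat k m"
  shows "mat_adjoint (A * B) = mat_adjoint B * mat_adjoint A"
  using assms by (intro eq_matI) (auto simp: scalar_prod_def row_def col_def mult.commute)

lemma conj_idx[simp]: fixes v :: "complex vec" shows "i < dim_vec v \<Longrightarrow> conjugate v $ i = cnj (v $ i)"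
  by simp

lemma adj_vec: fixes U :: "complex mat" assumes U: "U \<in> carrier_mat r c" and z: "z \<in> carrier_vec c" and w: "w \<in> carrier_vec r"
  shows "conjugate (U *\<^sub>v z) \<bullet> w = conjugate z \<bullet> (mat_adjoint U *\<^sub>v w)"
proof -
  have "conjugate (U *\<^sub>v z) \<bullet> w = (\<Sum>i<r. \<Sum>j<c. cnj (U $$ (i,j)) * cnj (z $ j) * w $ i)"
    using U z w by (simp add: scalar_prod_def row_def sum_distrib_right atLeast0LessThan)
  also have "\<dots> = (\<Sum>j<c. \<Sum>i<r. cnj (U $$ (i,j)) * cnj (z $ j) * w $ i)"
    by (rule sum.swap)
  also have "\<dots> = conjugate z \<bullet> (mat_adjoint U *\<^sub>v w)"
    using U z w by (simp add: scalar_prod_def row_def sum_distrib_left atLeast0LessThan mult.commute mult.left_commute)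
  finally show ?thesis .
qed

lemma sq_norm_conj: "conjugate v \<bullet> v = complex_of_real (sq_norm_cvec v)"
proof -
  have "conjugate v \<bullet> v = (\<Sum>i<dim_vec v. complex_of_real ((cmod (v$i))\<^sup>2))"
    unfolding scalar_prod_def by (simp add: atLeast0LessThan complex_norm_square mult.commute del: of_real_power)
  thus ?thesis by (simp add: sq_norm_cvec_def del: of_real_power)
qed

lemma sq_norm_nonneg: "sq_norm_cvec v \<ge> 0"
  by (simp add: sq_norm_cvec_def sum_nonneg)

lemma sq_norm_zero: assumes "v \<in> carrier_vec n" shows "sq_norm_cvec v = 0 \<longleftrightarrow> v = 0\<^sub>v n"
proof
  assume "sq_norm_cvec v = 0"
  hence "\<forall>k\<in>{..<dim_vec v}. (cmod (v $ k))\<^sup>2 = 0"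
    unfolding sq_norm_cvec_def by (subst sum_nonneg_eq_0_iff[symmetric], auto)
  thus "v = 0\<^sub>v n" using assms by (intro eq_vecI, auto)
qed (auto simp: sq_norm_cvec_def)

lemma sq_norm_comb: assumes a: "a \<in> carrier_vec n" and b: "b \<in> carrier_vec n"
  shows "sq_norm_cvec (a + complex_of_real c \<cdot>\<^sub>v b) = sq_norm_cvec a + 2 * c * Re (conjugate a \<bullet> b) + c\<^sup>2 * sq_norm_cvec b"
proof -
  have p: "(cmod (x + complex_of_real c * y))\<^sup>2 = (cmod x)\<^sup>2 + 2 * c * Re (cnj x * y) + c\<^sup>2 * (cmod y)\<^sup>2" for x y
    unfolding cmod_power2 by (simp add: power2_eq_square algebra_simps)
  show ?thesis using a b
    by (simp add: sq_norm_cvec_def p scalar_prod_def sum.distrib sum_distrib_left atLeast0LessThan)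
      (simp add: sum_distrib_left sum.distrib distrib_left)
qed

lemma Re_conj_sym: assumes "a \<in> carrier_vec n" "b \<in> carrier_vec n"
  shows "Re (conjugate a \<bullet> b) = Re (conjugate b \<bullet> a)"
  using assms by (simp add: scalar_prod_def atLeast0LessThan mult.commute)

lemma pd_inv: assumes A: "A \<in> carrier_mat n n"
  and pd: "\<And>v. v \<in> carrier_vec n \<Longrightarrow> v \<noteq> 0\<^sub>v n \<Longrightarrow> Re (conjugate v \<bullet> (A *\<^sub>v v)) > 0"
  shows "mat_inv A \<in> carrier_mat n n \<and> A * mat_inv A = 1\<^sub>m n \<and> mat_inv A * A = 1\<^sub>m n"
proof -
  have "det A \<noteq> 0"
  proof
    assume "det A = 0"
    then obtain v where v: "v \<in> carrier_vec n" "v \<noteq> 0\<^sub>v n" "A *\<^sub>v v = 0\<^sub>v n"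
      using det_0_iff_vec_prod_zero[OF A] by auto
    from pd[OF v(1,2)] v(3) v(1) show False by simp
  qed
  from det_non_zero_imp_unit[OF A this, of undefined]
  have U: "A \<in> Units (ring_mat TYPE(complex) n undefined)" .
  obtain B where "mat_inverse A = Some B"
    using mat_inverse(1)[OF A, of undefined] U by (cases "mat_inverse A", auto)
  from mat_inverse(2)[OF A this] have B: "A * B = 1\<^sub>m n" "B * A = 1\<^sub>m n" "B \<in> carrier_mat n n" by auto
  have ex: "\<exists>B. B \<in> carrier_mat (dim_row A) (dim_row A) \<and> inverts_mat A B \<and> inverts_mat B A"
    using B A by (intro exI[of _ B], auto simp: inverts_mat_def)
  from someI_ex[OF ex] have "mat_inv A \<in> carrier_mat n n \<and> inverts_mat A (mat_inv A) \<and> inverts_mat (mat_inv A) A"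
    unfolding mat_inv_def using A by auto
  thus ?thesis unfolding inverts_mat_def using A by auto
qed



lemma sum_lessThan_add: "(\<Sum>k<m+(n::nat). f k) = (\<Sum>k<m. f k) + (\<Sum>k<n. f (m+k))"
  by (induction n) (auto simp: add.assoc)

lemma sum_pair: "(\<Sum>k<(a::nat)*b. f k) = (\<Sum>i<a. \<Sum>j<b. f (i*b+j))"
proof (induction a)
  case (Suc a)
  have "(\<Sum>k<Suc a*b. f k) = (\<Sum>k<a*b + b. f k)" by (simp add: add.commute)
  also have "\<dots> = (\<Sum>k<a*b. f k) + (\<Sum>j<b. f (a*b+j))" by (rule sum_lessThan_add)
  finally show ?case using Suc by simp
qed simp

lemma kron_carrier[simp]: "A \<in> carrier_mat a b \<Longrightarrow> B \<in> carrier_mat c d \<Longrightarrow> kron A B \<in> carrier_mat (a*c) (b*d)"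
  by (auto simp: kron_def)

lemma kron_dims[simp]: "dim_row (kron A B) = dim_row A * dim_row B" "dim_col (kron A B) = dim_col A * dim_col B"
  by (auto simp: kron_def)

lemma kron_index[simp]: "i < dim_row A * dim_row B \<Longrightarrow> j < dim_col A * dim_col B \<Longrightarrow>
   kron A B $$ (i,j) = A $$ (i div dim_row B, j div dim_col B) * B $$ (i mod dim_row B, j mod dim_col B)"
  by (auto simp: kron_def)

lemma kron_adj: "mat_adjoint (kron A B) = kron (mat_adjoint A) (mat_adjoint B)"
proof (rule eq_matI)
  fix i j assume i: "i < dim_row (kron (mat_adjoint A) (mat_adjoint B))"
    and j: "j < dim_col (kron (mat_adjoint A) (mat_adjoint B))"
  hence i': "i < dim_col A * dim_col B" and j': "j < dim_row A * dim_row B" by auto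
  have "i div dim_col B < dim_col A" "j div dim_row B < dim_row A"
    using i' j' by (auto simp: less_mult_imp_div_less)
  moreover have "i mod dim_col B < dim_col B" "j mod dim_row B < dim_row B"
    using i' j' by (metis mod_less_divisor mult_zero_right not_gr_zero not_less_zero)+
  ultimately show "mat_adjoint (kron A B) $$ (i, j) = kron (mat_adjoint A) (mat_adjoint B) $$ (i, j)"
    using i' j' by simp
qed auto

lemma kron_mult: assumes A: "A \<in> carrier_mat a b" and B: "B \<in> carrier_mat c d"
  and C: "C \<in> carrier_mat b e" and D: "D \<in> carrier_mat d f"
  shows "kron A B * kron C D = kron (A * C) (B * D)"
proof (rule eq_matI)
  fix i j assume i: "i < dim_row (kron (A * C) (B * D))" and j: "j < dim_col (kron (A * C) (B * D))"
  hence i': "i < a * c" and j': "j < e * f" using A B C D by auto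
  have d1: "i div c < a" "j div f < e" using i' j' by (auto simp: less_mult_imp_div_less)
  have d2: "i mod c < c" "j mod f < f"
    using i' j' by (metis mod_less_divisor mult_zero_right not_gr_zero not_less_zero)+
  have "(kron A B * kron C D) $$ (i,j) = (\<Sum>k<b*d. kron A B $$ (i,k) * kron C D $$ (k,j))"
    using i' j' A B C D by (simp add: scalar_prod_def atLeast0LessThan)
  also have "\<dots> = (\<Sum>k1<b. \<Sum>k2<d. kron A B $$ (i,k1*d+k2) * kron C D $$ (k1*d+k2,j))"
    by (rule sum_pair)
  also have "\<dots> = (\<Sum>k1<b. \<Sum>k2<d. (A $$ (i div c, k1) * C $$ (k1, j div f)) * (B $$ (i mod c, k2) * D $$ (k2, j mod f)))"
  proof (intro sum.cong refl)
    fix k1 k2 assume k1: "k1 \<in> {..<b}" and k2: "k2 \<in> {..<d}"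
    have "k1*d+k2 < k1*d+d" using k2 by simp
    also have "\<dots> = Suc k1 * d" by simp
    also have "\<dots> \<le> b*d" using k1 by (intro mult_le_mono1) simp
    finally have lt: "k1*d+k2 < b*d" .
    have dv: "(k1*d+k2) div d = k1" "(k1*d+k2) mod d = k2" using k2 by auto
    show "kron A B $$ (i,k1*d+k2) * kron C D $$ (k1*d+k2,j) = (A $$ (i div c, k1) * C $$ (k1, j div f)) * (B $$ (i mod c, k2) * D $$ (k2, j mod f))"
      using i' j' lt A B C D dv by simp
  qed
  also have "\<dots> = (\<Sum>k1<b. A $$ (i div c, k1) * C $$ (k1, j div f)) * (\<Sum>k2<d. B $$ (i mod c, k2) * D $$ (k2, j mod f))"
    by (simp add: sum_product)
  also have "\<dots> = kron (A * C) (B * D) $$ (i,j)"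
    using i' j' A B C D d1 d2 by (simp add: scalar_prod_def atLeast0LessThan)
  finally show "(kron A B * kron C D) $$ (i,j) = kron (A * C) (B * D) $$ (i,j)" .
qed (insert A B C D, auto)



lemma unitary_completion:
  fixes v :: "complex vec"
  assumes v: "v \<in> carrier_vec n" and v0: "v \<noteq> 0\<^sub>v n" and n: "0 < n"
  shows "\<exists>U c. U \<in> carrier_mat n n \<and> mat_adjoint U * U = 1\<^sub>m n \<and> c \<noteq> 0 \<and> col U 0 = c \<cdot>\<^sub>v v"
proof -
  interpret cof_vec_space n "TYPE(complex)" .
  define b where "b = basis_completion v"
  define ws where "ws = gram_schmidt n b"
  from basis_completion[OF v v0, folded b_def]
  have dist_b: "distinct b" and indep: "\<not> lin_dep (set b)" and b: "set b \<subseteq> carrier_vec n" and hdb: "hd b = v"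
    and len_b: "length b = n" by auto
  from hdb len_b n obtain vs where bv: "b = v # vs" by (cases b, auto)
  from gram_schmidt_result[OF b dist_b indep refl, folded ws_def]
  have ws: "set ws \<subseteq> carrier_vec n" "corthogonal ws" "length ws = n"
    by (auto simp: len_b)
  from gram_schmidt_hd[OF v, of vs, folded bv] have hdws: "hd ws = v" unfolding ws_def .
  have wsi: "ws ! i \<in> carrier_vec n" if "i < n" for i using ws that by auto
  have ws0: "ws ! 0 = v" using hdws ws n by (cases ws, auto)
  have sqpos: "sq_norm_cvec (ws ! i) > 0" if i: "i < n" for i
  proof -
    have "ws ! i \<bullet>c ws ! i \<noteq> 0" using corthogonalD[OF ws(2), of i i] ws(3) i by auto
    hence "ws ! i \<noteq> 0\<^sub>v n" by auto
    with sq_norm_zero[OF wsi[OF i]] sq_norm_nonneg[of "ws ! i"] show ?thesis by auto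
  qed
  define r where "r = (\<lambda>i. complex_of_real (1 / sqrt (sq_norm_cvec (ws ! i))))"
  define us where "us = map (\<lambda>i. r i \<cdot>\<^sub>v ws ! i) [0..<n]"
  define U where "U = mat_of_cols n us"
  have lus: "length us = n" unfolding us_def by simp
  have usi: "us ! i = r i \<cdot>\<^sub>v ws ! i" if "i < n" for i using that unfolding us_def by simp
  have usc: "us ! i \<in> carrier_vec n" if "i < n" for i using usi[OF that] wsi[OF that] by simp
  have U: "U \<in> carrier_mat n n" unfolding U_def using mat_of_cols_carrier(1)[of n us] lus by simp
  have colU: "col U i = us ! i" if "i < n" for i unfolding U_def using that lus usc by simp
  have rowUH: "row (mat_adjoint U) i = conjugate (col U i)" if "i < n" for i
    using U that by (intro eq_vecI, auto)
  have "mat_adjoint U * U = 1\<^sub>m n"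
  proof (rule eq_matI)
    fix i j assume i: "i < dim_row (1\<^sub>m n :: complex mat)" and j: "j < dim_col (1\<^sub>m n :: complex mat)"
    hence i: "i < n" and j: "j < n" by auto
    have "(mat_adjoint U * U) $$ (i,j) = conjugate (us ! i) \<bullet> (us ! j)"
      using U i j rowUH[OF i] colU[OF i] colU[OF j] by simp
    also have "\<dots> = cnj (r i) * r j * (conjugate (ws ! i) \<bullet> ws ! j)"
      using usi[OF i] usi[OF j] wsi[OF i] wsi[OF j] by (simp add: conjugate_smult_vec)
    also have "conjugate (ws ! i) \<bullet> ws ! j = ws ! j \<bullet>c ws ! i"
      using conjugate_vec_sprod_comm[OF wsi[OF j] wsi[OF i]] by simp
    also have "cnj (r i) * r j * \<dots> = 1\<^sub>m n $$ (i,j)"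
    proof (cases "i = j")
      case True
      have "ws ! j \<bullet>c ws ! j = conjugate (ws ! j) \<bullet> ws ! j"
        using conjugate_vec_sprod_comm[OF wsi[OF j] wsi[OF j]] by simp
      also have "\<dots> = complex_of_real (sq_norm_cvec (ws ! j))" by (rule sq_norm_conj)
      moreover have "(1 / sqrt s) * (1 / sqrt s) * s = 1" if "s > 0" for s :: real
        using that by (simp add: field_simps)
      ultimately have "cnj (r j) * r j * (ws ! j \<bullet>c ws ! j) = 1"
        using sqpos[OF j] unfolding r_def by (simp del: of_real_mult add: of_real_mult[symmetric])
      thus ?thesis using True i j by simp
    next
      case False
      hence "ws ! j \<bullet>c ws ! i = 0" using corthogonalD[OF ws(2), of j i] ws(3) i j by auto
      thus ?thesis using False i j by simp
    qed
    finally show "(mat_adjoint U * U) $$ (i,j) = 1\<^sub>m n $$ (i,j)" .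
  qed (insert U, auto)
  moreover have "col U 0 = r 0 \<cdot>\<^sub>v v" using colU[OF n] usi[OF n] ws0 by simp
  moreover have "r 0 \<noteq> 0" using sqpos[OF n] unfolding r_def by simp
  ultimately show ?thesis using U by blast
qed



lemma qf_split:
  fixes A :: "complex mat"
  assumes A: "A \<in> carrier_mat (Suc m) (Suc m)"
    and c0: "\<And>i. i < Suc m \<Longrightarrow> A $$ (i,0) = (if i = 0 then e else 0)"
    and r0: "\<And>j. j < Suc m \<Longrightarrow> A $$ (0,j) = (if j = 0 then e else 0)"
    and z: "z \<in> carrier_vec (Suc m)"
  shows "conjugate z \<bullet> (A *\<^sub>v z) = cnj (z $ 0) * e * z $ 0 +
     conjugate (vec m (\<lambda>i. z $ Suc i)) \<bullet> (mat m m (\<lambda>(i,j). A $$ (Suc i, Suc j)) *\<^sub>v vec m (\<lambda>i. z $ Suc i))"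
proof -
  have inner: "row A i \<bullet> z = A $$ (i,0) * z $ 0 + (\<Sum>j<m. A $$ (i, Suc j) * z $ Suc j)" if "i < Suc m" for i
    using A z that by (simp add: scalar_prod_def atLeast0LessThan sum.lessThan_Suc_shift del: sum.lessThan_Suc)
  have "conjugate z \<bullet> (A *\<^sub>v z) = (\<Sum>i<Suc m. cnj (z $ i) * (row A i \<bullet> z))"
    using A z by (simp add: scalar_prod_def atLeast0LessThan)
  also have "\<dots> = cnj (z $ 0) * (row A 0 \<bullet> z) + (\<Sum>i<m. cnj (z $ Suc i) * (row A (Suc i) \<bullet> z))"
    by (rule sum.lessThan_Suc_shift)
  also have "row A 0 \<bullet> z = e * z $ 0" using inner[of 0] r0 by simp
  also have "(\<Sum>i<m. cnj (z $ Suc i) * (row A (Suc i) \<bullet> z)) = (\<Sum>i<m. cnj (z $ Suc i) * (\<Sum>j<m. A $$ (Suc i, Suc j) * z $ Suc j))"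
    by (intro sum.cong refl, subst inner, auto simp: c0)
  also have "\<dots> = conjugate (vec m (\<lambda>i. z $ Suc i)) \<bullet> (mat m m (\<lambda>(i,j). A $$ (Suc i, Suc j)) *\<^sub>v vec m (\<lambda>i. z $ Suc i))"
    by (simp add: scalar_prod_def atLeast0LessThan row_def)
  finally show ?thesis by (simp add: mult.assoc)
qed

lemma sq_norm_split: "z \<in> carrier_vec (Suc m) \<Longrightarrow> sq_norm_cvec z = (cmod (z $ 0))\<^sup>2 + sq_norm_cvec (vec m (\<lambda>i. z $ Suc i))"
  by (simp add: sq_norm_cvec_def sum.lessThan_Suc_shift del: sum.lessThan_Suc)

lemma eig_extend:
  fixes A :: "complex mat"
  assumes A: "A \<in> carrier_mat (Suc m) (Suc m)"
    and r0: "\<And>j. j < Suc m \<Longrightarrow> A $$ (0,j) = (if j = 0 then e else 0)"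
    and ev: "eigenvector (mat m m (\<lambda>(i,j). A $$ (Suc i, Suc j))) u k"
  defines "w \<equiv> vec (Suc m) (\<lambda>i. if i = 0 then 0 else u $ (i - 1))"
  shows "w \<in> carrier_vec (Suc m) \<and> w \<noteq> 0\<^sub>v (Suc m) \<and> A *\<^sub>v w = k \<cdot>\<^sub>v w"
proof -
  let ?A3 = "mat m m (\<lambda>(i,j). A $$ (Suc i, Suc j))"
  from ev have u: "u \<in> carrier_vec m" and u0: "u \<noteq> 0\<^sub>v m" and eu: "?A3 *\<^sub>v u = k \<cdot>\<^sub>v u"
    unfolding eigenvector_def by auto
  have w: "w \<in> carrier_vec (Suc m)" unfolding w_def by simp
  have "w \<noteq> 0\<^sub>v (Suc m)"
  proof
    assume "w = 0\<^sub>v (Suc m)"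
    moreover have "u $ i = w $ Suc i" if "i < m" for i using that by (simp add: w_def)
    ultimately have "u = 0\<^sub>v m" using u by (intro eq_vecI) auto
    with u0 show False by simp
  qed
  moreover have "A *\<^sub>v w = k \<cdot>\<^sub>v w"
  proof (rule eq_vecI)
    fix i assume "i < dim_vec (k \<cdot>\<^sub>v w)"
    hence i: "i < Suc m" unfolding w_def by simp
    have rw: "row A i \<bullet> w = (\<Sum>j<m. A $$ (i, Suc j) * u $ j)"
      using A i u by (simp add: scalar_prod_def atLeast0LessThan sum.lessThan_Suc_shift w_def del: sum.lessThan_Suc)
    show "(A *\<^sub>v w) $ i = (k \<cdot>\<^sub>v w) $ i"
    proof (cases i)
      case 0 thus ?thesis using A rw r0 by (simp add: w_def)
    next
      case (Suc i')
      have "(?A3 *\<^sub>v u) $ i' = (\<Sum>j<m. A $$ (i, Suc j) * u $ j)"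
        using Suc i u by (simp add: scalar_prod_def atLeast0LessThan row_def)
      thus ?thesis using A rw Suc i u eu by (simp add: w_def)
    qed
  qed (insert A, simp add: w_def)
  ultimately show ?thesis using w by blast
qed



lemma herm_entry: fixes A :: "complex mat"
  assumes "A \<in> carrier_mat n n" "mat_adjoint A = A" "i < n" "j < n"
  shows "A $$ (i,j) = cnj (A $$ (j,i))"
proof -
  have "A $$ (i,j) = mat_adjoint A $$ (i,j)" using assms(2) by simp
  also have "\<dots> = cnj (A $$ (j,i))" by (rule adj_index) (use assms in auto)
  finally show ?thesis .
qed

lemma KL:
  fixes A :: "complex mat"
  assumes "A \<in> carrier_mat n n" "mat_adjoint A = A" "0 < n"
  shows "\<exists>\<mu>::real. eigenvalue A (complex_of_real \<mu>) \<and>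
     (\<forall>y\<in>carrier_vec n. \<mu> * sq_norm_cvec y \<le> Re (conjugate y \<bullet> (A *\<^sub>v y)))"
  using assms
proof (induction n arbitrary: A)
  case 0 thus ?case by simp
next
  case (Suc m A)
  note A = Suc.prems(1) and H = Suc.prems(2)
  let ?n = "Suc m"
  have "degree (char_poly A) = ?n" using degree_monic_char_poly[OF A] by simp
  hence "\<not> constant (poly (char_poly A))" by (simp add: constant_degree)
  from fundamental_theorem_of_algebra[OF this] obtain e where "poly (char_poly A) e = 0" by auto
  hence eige: "eigenvalue A e" using eigenvalue_root_char_poly[OF A] by simp
  then obtain v where "eigenvector A v e" unfolding eigenvalue_def by auto
  hence v: "v \<in> carrier_vec ?n" and v0: "v \<noteq> 0\<^sub>v ?n" and ev: "A *\<^sub>v v = e \<cdot>\<^sub>v v"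
    using A unfolding eigenvector_def by auto
  have sv: "sq_norm_cvec v \<noteq> 0" using sq_norm_zero[OF v] v0 by simp
  have "conjugate v \<bullet> (A *\<^sub>v v) = e * complex_of_real (sq_norm_cvec v)"
    using v by (simp add: ev sq_norm_conj)
  moreover have "conjugate v \<bullet> (A *\<^sub>v v) = cnj e * complex_of_real (sq_norm_cvec v)"
  proof -
    have "conjugate v \<bullet> (A *\<^sub>v v) = conjugate v \<bullet> (mat_adjoint A *\<^sub>v v)" using H by simp
    also have "\<dots> = conjugate (A *\<^sub>v v) \<bullet> v" using adj_vec[OF A v v] by simp
    also have "\<dots> = cnj e * (conjugate v \<bullet> v)" using v by (simp add: ev conjugate_smult_vec)
    finally show ?thesis by (simp add: sq_norm_conj)
  qed
  ultimately have "cnj e = e" using sv by simp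
  hence eR: "e = complex_of_real (Re e)" by (simp add: complex_eq_iff)
  define er where "er = Re e"
  have eR': "e = complex_of_real er" using eR er_def by simp
  have eig_e: "eigenvalue A (complex_of_real er)" using eige eR' by simp
  show ?case
  proof (cases "m = 0")
    case True
    have v00: "v $ 0 \<noteq> 0"
    proof
      assume "v $ 0 = 0"
      hence "v = 0\<^sub>v ?n" using v True by (intro eq_vecI) auto
      with v0 show False by simp
    qed
    have "(A *\<^sub>v v) $ 0 = A $$ (0,0) * v $ 0" using A v True by (simp add: scalar_prod_def row_def)
    hence A00: "A $$ (0,0) = e" using ev v v00 by simp
    have "\<forall>y\<in>carrier_vec ?n. er * sq_norm_cvec y \<le> Re (conjugate y \<bullet> (A *\<^sub>v y))"
    proof
      fix y :: "complex vec" assume y: "y \<in> carrier_vec ?n"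
      have "conjugate y \<bullet> (A *\<^sub>v y) = e * (cnj (y $ 0) * y $ 0)"
        using A y True A00 by (simp add: scalar_prod_def row_def)
      also have "cnj (y $ 0) * y $ 0 = complex_of_real ((cmod (y $ 0))\<^sup>2)"
        by (simp add: complex_norm_square mult.commute del: of_real_power)
      finally have "Re (conjugate y \<bullet> (A *\<^sub>v y)) = er * (cmod (y $ 0))\<^sup>2" using eR' by simp
      moreover have "sq_norm_cvec y = (cmod (y $ 0))\<^sup>2" using y True by (simp add: sq_norm_cvec_def)
      ultimately show "er * sq_norm_cvec y \<le> Re (conjugate y \<bullet> (A *\<^sub>v y))" by simp
    qed
    thus ?thesis using eig_e True by blast
  next
    case False
    obtain U c where U: "U \<in> carrier_mat ?n ?n" and UU: "mat_adjoint U * U = 1\<^sub>m ?n"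
      and c0: "c \<noteq> 0" and cU: "col U 0 = c \<cdot>\<^sub>v v"
      using unitary_completion[OF v v0] by auto
    have UH: "mat_adjoint U \<in> carrier_mat ?n ?n" using U by simp
    have UU': "U * mat_adjoint U = 1\<^sub>m ?n" using mat_mult_left_right_inverse[OF UH U UU] .
    define A' where "A' = mat_adjoint U * A * U"
    have A': "A' \<in> carrier_mat ?n ?n" unfolding A'_def by (rule mult_carrier_mat[OF mult_carrier_mat[OF UH A] U])
    have UHA: "mat_adjoint U * A \<in> carrier_mat ?n ?n" using UH A by simp
    have H': "mat_adjoint A' = A'"
    proof -
      have "mat_adjoint A' = mat_adjoint U * mat_adjoint (mat_adjoint U * A)"
        unfolding A'_def by (rule adj_mult[OF UHA U])
      also have "mat_adjoint (mat_adjoint U * A) = mat_adjoint A * U"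
        using adj_mult[OF UH A] by simp
      finally show ?thesis using H UH A U unfolding A'_def by (simp add: assoc_mult_mat[of _ ?n ?n _ ?n _ ?n])
    qed
    have AU: "A *\<^sub>v col U 0 = e \<cdot>\<^sub>v col U 0"
      using cU mult_mat_vec[OF A v, of c] ev by (simp add: smult_smult_assoc mult.commute)
    have c0': "A' $$ (i,0) = (if i = 0 then e else 0)" if i: "i < ?n" for i
    proof -
      have "A' $$ (i,0) = (mat_adjoint U * (A * U)) $$ (i,0)"
        unfolding A'_def using UH A U by (simp add: assoc_mult_mat[of _ ?n ?n _ ?n _ ?n])
      also have "\<dots> = row (mat_adjoint U) i \<bullet> col (A * U) 0" using UH A U i by simp
      also have "col (A * U) 0 = A *\<^sub>v col U 0" by (rule col_mult2[OF A U]) simp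
      also have "row (mat_adjoint U) i \<bullet> (A *\<^sub>v col U 0) = e * (row (mat_adjoint U) i \<bullet> col U 0)"
        using AU U UH i by simp
      also have "row (mat_adjoint U) i \<bullet> col U 0 = (mat_adjoint U * U) $$ (i,0)" using UH U i by simp
      finally show ?thesis using UU i by simp
    qed
    have r0': "A' $$ (0,j) = (if j = 0 then e else 0)" if j: "j < ?n" for j
      using herm_entry[OF A' H' _ j, of 0] c0'[OF j] eR' by (cases "j = 0") auto
    define A3 where "A3 = mat m m (\<lambda>(i,j). A' $$ (Suc i, Suc j))"
    have A3: "A3 \<in> carrier_mat m m" unfolding A3_def by simp
    have H3: "mat_adjoint A3 = A3"
    proof (rule eq_matI)
      fix i j assume "i < dim_row A3" "j < dim_col A3"
      hence i: "i < m" and j: "j < m" unfolding A3_def by auto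
      show "mat_adjoint A3 $$ (i,j) = A3 $$ (i,j)"
        using herm_entry[OF A' H', of "Suc i" "Suc j"] i j unfolding A3_def by simp
    qed (auto simp: A3_def)
    from Suc.IH[OF A3 H3] False obtain \<mu>3 where eig3: "eigenvalue A3 (complex_of_real \<mu>3)"
      and R3: "\<forall>y\<in>carrier_vec m. \<mu>3 * sq_norm_cvec y \<le> Re (conjugate y \<bullet> (A3 *\<^sub>v y))" by auto
    define \<mu> where "\<mu> = min er \<mu>3"
    have AUeq: "A * U = U * A'"
    proof -
      have "U * A' = (U * (mat_adjoint U * A)) * U"
        unfolding A'_def by (rule assoc_mult_mat[OF U UHA U, symmetric])
      also have "U * (mat_adjoint U * A) = (U * mat_adjoint U) * A"
        by (rule assoc_mult_mat[OF U UH A, symmetric])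
      finally show ?thesis using UU' A by simp
    qed
    have eig: "eigenvalue A (complex_of_real \<mu>)"
    proof (cases "\<mu> = er")
      case True thus ?thesis using eig_e by simp
    next
      case False
      hence m3: "\<mu> = \<mu>3" unfolding \<mu>_def by auto
      from eig3 obtain u where "eigenvector A3 u (complex_of_real \<mu>3)" unfolding eigenvalue_def by auto
      from eig_extend[OF A' r0' this[unfolded A3_def]] obtain w where w: "w \<in> carrier_vec ?n"
        and w0: "w \<noteq> 0\<^sub>v ?n" and Aw: "A' *\<^sub>v w = complex_of_real \<mu>3 \<cdot>\<^sub>v w" by blast
      have "A *\<^sub>v (U *\<^sub>v w) = (A * U) *\<^sub>v w" using A U w by simp
      also have "\<dots> = U *\<^sub>v (A' *\<^sub>v w)" unfolding AUeq using U A' w by simp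
      also have "\<dots> = complex_of_real \<mu>3 \<cdot>\<^sub>v (U *\<^sub>v w)" unfolding Aw using mult_mat_vec[OF U w] .
      finally have Ev: "A *\<^sub>v (U *\<^sub>v w) = complex_of_real \<mu>3 \<cdot>\<^sub>v (U *\<^sub>v w)" .
      have "U *\<^sub>v w \<noteq> 0\<^sub>v ?n"
      proof
        assume "U *\<^sub>v w = 0\<^sub>v ?n"
        hence "mat_adjoint U *\<^sub>v (U *\<^sub>v w) = 0\<^sub>v ?n" using UH by (intro eq_vecI) (auto simp: scalar_prod_def)
        moreover have "mat_adjoint U *\<^sub>v (U *\<^sub>v w) = w"
          using assoc_mult_mat_vec[OF UH U w] UU w by simp
        ultimately show False using w0 by simp
      qed
      hence "eigenvector A (U *\<^sub>v w) (complex_of_real \<mu>3)"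
        unfolding eigenvector_def using Ev A U w by simp
      thus ?thesis unfolding eigenvalue_def m3 by blast
    qed
    have "\<forall>y\<in>carrier_vec ?n. \<mu> * sq_norm_cvec y \<le> Re (conjugate y \<bullet> (A *\<^sub>v y))"
    proof
      fix y :: "complex vec" assume y: "y \<in> carrier_vec ?n"
      define z where "z = mat_adjoint U *\<^sub>v y"
      have z: "z \<in> carrier_vec ?n" unfolding z_def using UH y by (rule mult_mat_vec_carrier)
      have yz: "y = U *\<^sub>v z" unfolding z_def using assoc_mult_mat_vec[OF U UH y] UU' y by simp
      have "conjugate y \<bullet> (A *\<^sub>v y) = conjugate z \<bullet> (mat_adjoint U *\<^sub>v (A *\<^sub>v (U *\<^sub>v z)))"
        unfolding yz using adj_vec[OF U z, of "A *\<^sub>v (U *\<^sub>v z)"] A U z by simp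
      also have "mat_adjoint U *\<^sub>v (A *\<^sub>v (U *\<^sub>v z)) = A' *\<^sub>v z"
        unfolding A'_def using assoc_mult_mat_vec[OF UHA U z] assoc_mult_mat_vec[OF UH A, of "U *\<^sub>v z"] U z by simp
      finally have q: "conjugate y \<bullet> (A *\<^sub>v y) = conjugate z \<bullet> (A' *\<^sub>v z)" .
      have "complex_of_real (sq_norm_cvec y) = conjugate (U *\<^sub>v z) \<bullet> (U *\<^sub>v z)"
        unfolding yz sq_norm_conj ..
      also have "\<dots> = conjugate z \<bullet> (mat_adjoint U *\<^sub>v (U *\<^sub>v z))" using adj_vec[OF U z, of "U *\<^sub>v z"] U z by simp
      also have "mat_adjoint U *\<^sub>v (U *\<^sub>v z) = z" using assoc_mult_mat_vec[OF UH U z] UU z by simp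
      finally have sy: "sq_norm_cvec y = sq_norm_cvec z" by (simp add: sq_norm_conj)
      define z3 where "z3 = vec m (\<lambda>i. z $ Suc i)"
      have z3: "z3 \<in> carrier_vec m" unfolding z3_def by simp
      have qs: "conjugate z \<bullet> (A' *\<^sub>v z) = cnj (z $ 0) * e * z $ 0 + conjugate z3 \<bullet> (A3 *\<^sub>v z3)"
        unfolding z3_def A3_def by (rule qf_split[OF A' c0' r0' z])
      have re0: "Re (cnj (z $ 0) * e * z $ 0) = er * (cmod (z $ 0))\<^sup>2"
        using eR' unfolding cmod_power2 by (simp add: algebra_simps power2_eq_square)
      have sz: "sq_norm_cvec z = (cmod (z $ 0))\<^sup>2 + sq_norm_cvec z3"
        unfolding z3_def by (rule sq_norm_split[OF z])
      have "\<mu> * sq_norm_cvec z = \<mu> * (cmod (z $ 0))\<^sup>2 + \<mu> * sq_norm_cvec z3" unfolding sz by (simp add: algebra_simps)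
      also have "\<dots> \<le> er * (cmod (z $ 0))\<^sup>2 + \<mu>3 * sq_norm_cvec z3"
        by (intro add_mono mult_right_mono) (auto simp: \<mu>_def sq_norm_nonneg)
      also have "\<dots> \<le> Re (conjugate y \<bullet> (A *\<^sub>v y))"
        unfolding q qs using R3 z3 re0 by simp
      finally show "\<mu> * sq_norm_cvec y \<le> Re (conjugate y \<bullet> (A *\<^sub>v y))" unfolding sy .
    qed
    thus ?thesis using eig by blast
  qed
qed



lemma fin_eig: fixes A :: "complex mat" assumes A: "A \<in> carrier_mat n n"
  shows "finite {x::real. eigenvalue A (complex_of_real x)}"
proof -
  have p: "char_poly A \<noteq> 0" using degree_monic_char_poly[OF A] by auto
  have "{x::real. eigenvalue A (complex_of_real x)} = complex_of_real -` {z. poly (char_poly A) z = 0}"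
    using eigenvalue_root_char_poly[OF A] by auto
  also have "finite \<dots>"
    by (rule finite_vimageI[OF poly_roots_finite[OF p]]) (simp add: inj_def)
  finally show ?thesis .
qed

lemma shift_mult: fixes A :: "complex mat"
  assumes A: "A \<in> carrier_mat n n" and v: "v \<in> carrier_vec n"
  shows "(A + c \<cdot>\<^sub>m 1\<^sub>m n) *\<^sub>v v = A *\<^sub>v v + c \<cdot>\<^sub>v v"
proof (rule eq_vecI)
  fix i assume "i < dim_vec (A *\<^sub>v v + c \<cdot>\<^sub>v v)"
  hence i: "i < n" using A v by simp
  have "row (c \<cdot>\<^sub>m 1\<^sub>m n) i \<bullet> v = c * v $ i"
  proof -
    have "row (c \<cdot>\<^sub>m 1\<^sub>m n) i = c \<cdot>\<^sub>v unit_vec n i" using i by (intro eq_vecI) auto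
    thus ?thesis using i v by simp
  qed
  thus "((A + c \<cdot>\<^sub>m 1\<^sub>m n) *\<^sub>v v) $ i = (A *\<^sub>v v + c \<cdot>\<^sub>v v) $ i"
    using A v i by simp (subst add_scalar_prod_distrib[of _ n], auto)
qed (insert A v, auto)

lemma gram_qf: fixes G :: "complex mat"
  assumes G: "G \<in> carrier_mat r c" and v: "v \<in> carrier_vec c"
  shows "Re (conjugate v \<bullet> ((mat_adjoint G * G) *\<^sub>v v)) = sq_norm_cvec (G *\<^sub>v v)"
proof -
  have "(mat_adjoint G * G) *\<^sub>v v = mat_adjoint G *\<^sub>v (G *\<^sub>v v)" using assoc_mult_mat_vec[OF adj_carrier[OF G] G v] .
  moreover have "conjugate v \<bullet> (mat_adjoint G *\<^sub>v (G *\<^sub>v v)) = conjugate (G *\<^sub>v v) \<bullet> (G *\<^sub>v v)"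
    using adj_vec[OF G v, of "G *\<^sub>v v"] G v by simp
  ultimately show ?thesis by (simp add: sq_norm_conj)
qed

lemma conj_mat_adj: "mat_adjoint (conj_mat S) = transpose_mat S"
  by (rule eq_matI) (auto simp: conj_mat_def)



lemma main_abstract:
  fixes G :: "complex mat" and x3 :: "complex vec" and \<tau> :: real
  assumes G: "G \<in> carrier_mat r m" and x3: "x3 \<in> carrier_vec m"
  defines "A \<equiv> mat_adjoint G * G"
  defines "s \<equiv> (\<lambda>lam::real. mat_inv (A + complex_of_real lam \<cdot>\<^sub>m 1\<^sub>m m) *\<^sub>v x3)"
  defines "g \<equiv> (\<lambda>lam::real. sq_norm_cvec (s lam))"
  shows "(\<forall>lam1 lam2. 0 < lam1 \<and> lam1 \<le> lam2 \<longrightarrow> g lam2 \<le> g lam1) \<and>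
         (\<forall>lam_i. lam_i > 0 \<and> \<tau> > 0 \<and> g lam_i = \<tau> \<longrightarrow>
            lam_i \<le> sqrt (sq_norm_cvec x3 / \<tau>) - min_eigenvalue A)"
proof -
  have GH: "mat_adjoint G \<in> carrier_mat m r" using G by simp
  have A: "A \<in> carrier_mat m m" unfolding A_def by (rule mult_carrier_mat[OF GH G])
  have H: "mat_adjoint A = A" unfolding A_def using adj_mult[OF GH G] by simp
  have psd: "Re (conjugate v \<bullet> (A *\<^sub>v v)) \<ge> 0" if "v \<in> carrier_vec m" for v
    unfolding A_def using gram_qf[OF G that] sq_norm_nonneg by simp
  define B where "B = (\<lambda>lam::real. A + complex_of_real lam \<cdot>\<^sub>m 1\<^sub>m m)"
  have Bv: "B lam *\<^sub>v v = A *\<^sub>v v + complex_of_real lam \<cdot>\<^sub>v v" if "v \<in> carrier_vec m" for lam v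
    unfolding B_def by (rule shift_mult[OF A that])
  have B: "B lam \<in> carrier_mat m m" for lam unfolding B_def using A by simp
  have inv: "mat_inv (B lam) \<in> carrier_mat m m \<and> B lam * mat_inv (B lam) = 1\<^sub>m m \<and> mat_inv (B lam) * B lam = 1\<^sub>m m"
    if lam: "lam > 0" for lam
  proof (rule pd_inv[OF B])
    fix v :: "complex vec" assume v: "v \<in> carrier_vec m" and v0: "v \<noteq> 0\<^sub>v m"
    have "conjugate v \<bullet> (B lam *\<^sub>v v) = conjugate v \<bullet> (A *\<^sub>v v) + complex_of_real lam * (conjugate v \<bullet> v)"
      unfolding Bv[OF v] using A v by (simp add: scalar_prod_add_distrib[of _ m])
    hence "Re (conjugate v \<bullet> (B lam *\<^sub>v v)) = Re (conjugate v \<bullet> (A *\<^sub>v v)) + lam * sq_norm_cvec v"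
      by (simp add: sq_norm_conj)
    moreover have "sq_norm_cvec v > 0" using sq_norm_zero[OF v] v0 sq_norm_nonneg[of v] by auto
    ultimately show "Re (conjugate v \<bullet> (B lam *\<^sub>v v)) > 0" using psd[OF v] lam by (simp add: add_nonneg_pos)
  qed
  have sB: "s lam = mat_inv (B lam) *\<^sub>v x3" for lam unfolding s_def B_def ..
  have sc: "s lam \<in> carrier_vec m" if "lam > 0" for lam unfolding sB using inv[OF that] x3 by auto
  have Bs: "B lam *\<^sub>v s lam = x3" if "lam > 0" for lam
    unfolding sB using assoc_mult_mat_vec[OF B conjunct1[OF inv[OF that]] x3, symmetric] inv[OF that] x3 by simp
  have uniq: "u = s lam" if "lam > 0" "u \<in> carrier_vec m" "B lam *\<^sub>v u = x3" for lam u
  proof -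
    have "mat_inv (B lam) *\<^sub>v (B lam *\<^sub>v u) = u"
      using assoc_mult_mat_vec[OF conjunct1[OF inv[OF that(1)]] B that(2), symmetric] inv[OF that(1)] that(2) by simp
    thus ?thesis using that(3) unfolding sB by simp
  qed
  have mono: "\<forall>lam1 lam2. 0 < lam1 \<and> lam1 \<le> lam2 \<longrightarrow> g lam2 \<le> g lam1"
  proof (intro allI impI, elim conjE)
    fix l1 l2 :: real assume l1: "0 < l1" and l12: "l1 \<le> l2"
    have l2: "0 < l2" using l1 l12 by simp
    define y2 where "y2 = s l2"
    have y2: "y2 \<in> carrier_vec m" unfolding y2_def using sc[OF l2] .
    define w where "w = mat_inv (B l1) *\<^sub>v y2"
    have w: "w \<in> carrier_vec m" unfolding w_def using inv[OF l1] y2 by auto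
    have Bw: "B l1 *\<^sub>v w = y2"
      unfolding w_def using assoc_mult_mat_vec[OF B conjunct1[OF inv[OF l1]] y2, symmetric] inv[OF l1] y2 by simp
    define \<delta> where "\<delta> = l2 - l1"
    have d: "\<delta> \<ge> 0" unfolding \<delta>_def using l12 by simp
    define u where "u = y2 + complex_of_real \<delta> \<cdot>\<^sub>v w"
    have u: "u \<in> carrier_vec m" unfolding u_def using y2 w by simp
    have Bw': "y2 = A *\<^sub>v w + complex_of_real l1 \<cdot>\<^sub>v w" using Bw Bv[OF w] by simp
    have x3': "x3 = A *\<^sub>v y2 + complex_of_real l2 \<cdot>\<^sub>v y2" using Bs[OF l2] Bv[OF y2] unfolding y2_def by simp
    have "B l1 *\<^sub>v u = x3"
    proof (rule eq_vecI)
      fix i assume "i < dim_vec x3"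
      hence i: "i < m" using x3 by simp
      have e1: "y2 $ i = (A *\<^sub>v w) $ i + l1 * w $ i" using arg_cong[OF Bw', of "\<lambda>x. x $ i"] A w i by simp
      have Au: "A *\<^sub>v u = A *\<^sub>v y2 + complex_of_real \<delta> \<cdot>\<^sub>v (A *\<^sub>v w)"
        unfolding u_def using mult_add_distrib_mat_vec[OF A y2, of "complex_of_real \<delta> \<cdot>\<^sub>v w"] mult_mat_vec[OF A w] w by simp
      have "(B l1 *\<^sub>v u) $ i = (A *\<^sub>v u) $ i + l1 * u $ i" using Bv[OF u] A u i by simp
      also have "\<dots> = (A *\<^sub>v y2) $ i + \<delta> * (A *\<^sub>v w) $ i + l1 * (y2 $ i + \<delta> * w $ i)"
        unfolding Au using A y2 w i by (simp add: u_def)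
      also have "\<dots> = (A *\<^sub>v y2) $ i + l2 * y2 $ i" unfolding e1 \<delta>_def by (simp add: algebra_simps)
      also have "\<dots> = x3 $ i" using arg_cong[OF x3', of "\<lambda>x. x $ i"] A y2 i by simp
      finally show "(B l1 *\<^sub>v u) $ i = x3 $ i" .
    qed (insert B x3, auto)
    hence y1: "s l1 = u" using uniq[OF l1 u] by simp
    have "g l1 = sq_norm_cvec y2 + 2 * \<delta> * Re (conjugate y2 \<bullet> w) + \<delta>\<^sup>2 * sq_norm_cvec w"
      unfolding g_def y1 u_def by (rule sq_norm_comb[OF y2 w])
    moreover have "Re (conjugate y2 \<bullet> w) \<ge> 0"
    proof -
      have "Re (conjugate y2 \<bullet> w) = Re (conjugate w \<bullet> y2)" by (rule Re_conj_sym[OF y2 w])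
      also have "conjugate w \<bullet> y2 = conjugate w \<bullet> (A *\<^sub>v w) + complex_of_real l1 * (conjugate w \<bullet> w)"
        unfolding Bw' using A w by (simp add: scalar_prod_add_distrib[of _ m])
      finally have "Re (conjugate y2 \<bullet> w) = Re (conjugate w \<bullet> (A *\<^sub>v w)) + l1 * sq_norm_cvec w"
        by (simp add: sq_norm_conj)
      thus ?thesis using psd[OF w] l1 sq_norm_nonneg[of w] by simp
    qed
    ultimately show "g l2 \<le> g l1" unfolding g_def y2_def using d sq_norm_nonneg[of w]
      by (simp add: y2_def[symmetric])
  qed
  have bound: "\<forall>lam_i. lam_i > 0 \<and> \<tau> > 0 \<and> g lam_i = \<tau> \<longrightarrow>
            lam_i \<le> sqrt (sq_norm_cvec x3 / \<tau>) - min_eigenvalue A"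
  proof (intro allI impI, elim conjE)
    fix lam assume lam: "lam > 0" and tau: "\<tau> > 0" and gt: "g lam = \<tau>"
    define y where "y = s lam"
    have y: "y \<in> carrier_vec m" unfolding y_def using sc[OF lam] .
    have sy: "sq_norm_cvec y = \<tau>" using gt unfolding g_def y_def .
    have m: "0 < m"
    proof (rule ccontr)
      assume "\<not> 0 < m"
      hence "m = 0" by simp
      hence "y = 0\<^sub>v 0" using y by auto
      hence "sq_norm_cvec y = 0" by (simp add: sq_norm_cvec_def)
      with sy tau show False by simp
    qed
    from KL[OF A H m] obtain \<mu> where eig: "eigenvalue A (complex_of_real \<mu>)"
      and R: "\<forall>y\<in>carrier_vec m. \<mu> * sq_norm_cvec y \<le> Re (conjugate y \<bullet> (A *\<^sub>v y))" by auto
    have mu0: "\<mu> \<ge> 0"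
    proof -
      from eig obtain u where "eigenvector A u (complex_of_real \<mu>)" unfolding eigenvalue_def by auto
      hence u: "u \<in> carrier_vec m" and u0: "u \<noteq> 0\<^sub>v m" and Au: "A *\<^sub>v u = complex_of_real \<mu> \<cdot>\<^sub>v u"
        using A unfolding eigenvector_def by auto
      have "conjugate u \<bullet> (A *\<^sub>v u) = complex_of_real (\<mu> * sq_norm_cvec u)"
        unfolding Au using u by (simp add: sq_norm_conj)
      hence "\<mu> * sq_norm_cvec u \<ge> 0" using psd[OF u] by simp
      moreover have "sq_norm_cvec u > 0" using sq_norm_zero[OF u] u0 sq_norm_nonneg[of u] by auto
      ultimately show ?thesis by (simp add: zero_le_mult_iff)
    qed
    have minle: "min_eigenvalue A \<le> \<mu>"
      unfolding min_eigenvalue_def by (rule Min_le[OF fin_eig[OF A]]) (use eig in simp)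
    have Ay: "A *\<^sub>v y \<in> carrier_vec m" using A y by simp
    have x3y: "x3 = A *\<^sub>v y + complex_of_real lam \<cdot>\<^sub>v y" using Bs[OF lam] Bv[OF y] unfolding y_def by simp
    define r where "r = Re (conjugate (A *\<^sub>v y) \<bullet> y)"
    have r: "r \<ge> \<mu> * \<tau>" using R y sy Re_conj_sym[OF Ay y] unfolding r_def by auto
    have sx: "sq_norm_cvec x3 = sq_norm_cvec (A *\<^sub>v y) + 2 * lam * r + lam\<^sup>2 * \<tau>"
      unfolding x3y r_def sy[symmetric] by (rule sq_norm_comb[OF Ay y])
    have "sq_norm_cvec (A *\<^sub>v y + complex_of_real (- \<mu>) \<cdot>\<^sub>v y) = sq_norm_cvec (A *\<^sub>v y) + 2 * (- \<mu>) * r + (- \<mu>)\<^sup>2 * \<tau>"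
      unfolding r_def sy[symmetric] by (rule sq_norm_comb[OF Ay y])
    hence s1: "sq_norm_cvec (A *\<^sub>v y) \<ge> 2 * \<mu> * r - \<mu>\<^sup>2 * \<tau>" using sq_norm_nonneg[of "A *\<^sub>v y + complex_of_real (- \<mu>) \<cdot>\<^sub>v y"] by (simp add: algebra_simps)
    have "2 * (\<mu> + lam) * r \<ge> 2 * (\<mu> + lam) * (\<mu> * \<tau>)"
      using r mu0 lam by (intro mult_left_mono) auto
    hence "(\<mu> + lam)\<^sup>2 * \<tau> \<le> sq_norm_cvec x3" using sx s1 by (simp add: power2_eq_square algebra_simps)
    hence "(\<mu> + lam)\<^sup>2 \<le> sq_norm_cvec x3 / \<tau>" using tau by (simp add: field_simps)
    hence "\<mu> + lam \<le> sqrt (sq_norm_cvec x3 / \<tau>)" by (rule real_le_rsqrt)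
    thus "lam \<le> sqrt (sq_norm_cvec x3 / \<tau>) - min_eigenvalue A" using minle by simp
  qed
  show ?thesis using mono bound by blast
qed



theorem lemma2:
  fixes N :: "nat \<Rightarrow> nat" and L :: nat
    and Z C :: "nat \<Rightarrow> complex mat" and K S :: "complex mat"
    and i :: nat and \<tau> :: real
  assumes i: "i \<in> {1, 2}"
    and Zpd: "\<And>j. j \<in> {1, 2} \<Longrightarrow> hermitian_pd (Z j) (N j)"
    and Cdim: "\<And>j. j \<in> {1, 2} \<Longrightarrow> C j \<in> carrier_mat (N j) (N j)"
    and ZC: "\<And>j. j \<in> {1, 2} \<Longrightarrow> Z j = C j * mat_adjoint (C j)"
    and Kpd: "hermitian_pd K L"
    and Sdim: "S \<in> carrier_mat (N 1 + N 2) L"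
  defines "CH \<equiv> blkdiag (C 1) (C 2)"
  defines "T \<equiv> mat_adjoint CH * conj_mat S
                 * mat_inv (transpose_mat S * CH * mat_adjoint CH * conj_mat S + K)"
  defines "Ti \<equiv> (if i = 1 then row_block T 0 (N 1) else row_block T (N 1) (N 2))"
  defines "X1 \<equiv> mat_adjoint T * mat_adjoint CH * CH * T"
  defines "X2 \<equiv> transpose_mat (Z i)"
  defines "x3 \<equiv> vec_mat (transpose_mat (mat_adjoint Ti * mat_adjoint (C i) * mat_adjoint (Z i)))"
  defines "s \<equiv> (\<lambda>lam::real. mat_inv (kron X1 X2 + complex_of_real lam \<cdot>\<^sub>m 1\<^sub>m (L * N i)) *\<^sub>v x3)"
  defines "g \<equiv> (\<lambda>lam::real. sq_norm_cvec (s lam))"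
  shows "(\<forall>lam1 lam2. 0 < lam1 \<and> lam1 \<le> lam2 \<longrightarrow> g lam2 \<le> g lam1) \<and>
         (\<forall>lam_i. lam_i > 0 \<and> \<tau> > 0 \<and> g lam_i = \<tau> \<longrightarrow>
            lam_i \<le> sqrt (sq_norm_cvec x3 / \<tau>) - min_eigenvalue (kron X1 X2))"
proof -
  have i12: "i = 1 \<or> i = 2" using i by auto
  have C1: "C 1 \<in> carrier_mat (N 1) (N 1)" and C2: "C 2 \<in> carrier_mat (N 2) (N 2)" using Cdim by auto
  have Ci: "C i \<in> carrier_mat (N i) (N i)" using Cdim i by auto
  have Zi: "Z i \<in> carrier_mat (N i) (N i)" and ZH: "mat_adjoint (Z i) = Z i"
    using Zpd[OF i] unfolding hermitian_pd_def by auto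
  have ZCi: "Z i = C i * mat_adjoint (C i)" using ZC[OF i] .
  let ?n = "N 1 + N 2"
  have CH: "CH \<in> carrier_mat ?n ?n" unfolding CH_def blkdiag_def using C1 C2 by simp
  have CHH: "mat_adjoint CH \<in> carrier_mat ?n ?n" using CH by simp
  have cS: "conj_mat S \<in> carrier_mat ?n L" using Sdim unfolding conj_mat_def by simp
  have tS: "transpose_mat S \<in> carrier_mat L ?n" using Sdim by simp
  have K: "K \<in> carrier_mat L L" and Kp: "\<And>v. v \<in> carrier_vec L \<Longrightarrow> v \<noteq> 0\<^sub>v L \<Longrightarrow> Re (conjugate v \<bullet> (K *\<^sub>v v)) > 0"
    using Kpd unfolding hermitian_pd_def by auto
  define W where "W = mat_adjoint CH * conj_mat S"
  have Wc: "W \<in> carrier_mat ?n L" unfolding W_def using CHH cS by simp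
  have WH: "mat_adjoint W = transpose_mat S * CH"
    unfolding W_def using adj_mult[OF CHH cS] by (simp add: conj_mat_adj)
  define M where "M = transpose_mat S * CH * mat_adjoint CH * conj_mat S + K"
  have MW: "transpose_mat S * CH * mat_adjoint CH * conj_mat S = mat_adjoint W * W"
  proof -
    have "mat_adjoint W * W = transpose_mat S * CH * (mat_adjoint CH * conj_mat S)"
      by (subst WH) (simp add: W_def)
    thus ?thesis using assoc_mult_mat[OF mult_carrier_mat[OF tS CH] CHH cS] by simp
  qed
  have WWc: "mat_adjoint W * W \<in> carrier_mat L L" using Wc by (intro mult_carrier_mat[of _ L ?n]) auto
  have M: "M \<in> carrier_mat L L" unfolding M_def MW using WWc K by simp
  have Minv: "mat_inv M \<in> carrier_mat L L \<and> M * mat_inv M = 1\<^sub>m L \<and> mat_inv M * M = 1\<^sub>m L"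
  proof (rule pd_inv[OF M])
    fix v :: "complex vec" assume v: "v \<in> carrier_vec L" and v0: "v \<noteq> 0\<^sub>v L"
    have "M *\<^sub>v v = (mat_adjoint W * W) *\<^sub>v v + K *\<^sub>v v"
      unfolding M_def MW by (rule add_mult_distrib_mat_vec[OF WWc K v])
    hence "conjugate v \<bullet> (M *\<^sub>v v) = conjugate v \<bullet> ((mat_adjoint W * W) *\<^sub>v v) + conjugate v \<bullet> (K *\<^sub>v v)"
      using v WWc K by (simp add: scalar_prod_add_distrib[of _ L])
    hence "Re (conjugate v \<bullet> (M *\<^sub>v v)) = sq_norm_cvec (W *\<^sub>v v) + Re (conjugate v \<bullet> (K *\<^sub>v v))"
      using gram_qf[OF Wc v] by simp
    thus "Re (conjugate v \<bullet> (M *\<^sub>v v)) > 0" using Kp[OF v v0] sq_norm_nonneg[of "W *\<^sub>v v"] by simp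
  qed
  have Tc: "T \<in> carrier_mat ?n L" unfolding T_def M_def[symmetric] W_def[symmetric]
    using Wc Minv by (intro mult_carrier_mat[of _ ?n L]) auto
  define G1 where "G1 = CH * T"
  have G1: "G1 \<in> carrier_mat ?n L" unfolding G1_def using CH Tc by simp
  have G1H: "mat_adjoint G1 \<in> carrier_mat L ?n" using G1 by simp
  have X1G: "X1 = mat_adjoint G1 * G1"
  proof -
    have "mat_adjoint G1 = mat_adjoint T * mat_adjoint CH" unfolding G1_def by (rule adj_mult[OF CH Tc])
    moreover have "mat_adjoint T * mat_adjoint CH * (CH * T) = mat_adjoint T * mat_adjoint CH * CH * T"
      using assoc_mult_mat[OF mult_carrier_mat[OF adj_carrier[OF Tc] CHH] CH Tc] by simp
    ultimately show ?thesis unfolding X1_def G1_def by simp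
  qed
  define F where "F = transpose_mat (C i)"
  have F: "F \<in> carrier_mat (N i) (N i)" unfolding F_def using Ci by simp
  have FH: "mat_adjoint F \<in> carrier_mat (N i) (N i)" using F by simp
  have X2F: "X2 = mat_adjoint F * F"
  proof (rule eq_matI)
    fix b c assume "b < dim_row (mat_adjoint F * F)" "c < dim_col (mat_adjoint F * F)"
    hence b: "b < N i" and c: "c < N i" using F by auto
    have "X2 $$ (b,c) = Z i $$ (c,b)" unfolding X2_def using Zi b c by simp
    also have "\<dots> = (\<Sum>q<N i. C i $$ (c,q) * cnj (C i $$ (b,q)))"
      unfolding ZCi using Ci b c by (simp add: scalar_prod_def atLeast0LessThan)
    also have "\<dots> = (mat_adjoint F * F) $$ (b,c)"
      unfolding F_def using Ci b c by (simp add: scalar_prod_def atLeast0LessThan mult.commute)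
    finally show "X2 $$ (b,c) = (mat_adjoint F * F) $$ (b,c)" .
  qed (insert Zi F, auto simp: X2_def)
  define G where "G = kron G1 F"
  have G: "G \<in> carrier_mat (?n * N i) (L * N i)" unfolding G_def using G1 F by simp
  have AG: "kron X1 X2 = mat_adjoint G * G"
    unfolding X1G X2F G_def kron_adj using kron_mult[OF G1H FH G1 F] by simp
  have Ti: "Ti \<in> carrier_mat (N i) L"
    unfolding Ti_def row_block_def using Tc i12 by auto
  have x3: "x3 \<in> carrier_vec (L * N i)"
    unfolding x3_def vec_mat_def using Ti Ci Zi by (simp add: mult.commute)
  from main_abstract[OF G x3, of \<tau>]
  show ?thesis unfolding g_def s_def AG .
qed

end
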